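(* Let $n\ge1$, $R>0$, $\gamma\in(0,1)$ and $\beta=\frac{2}{2-\gamma}$. Then there exists $U\in C^2((R,\infty))$, positive on $(R,\infty)$, such that $U$ and $U'$ extend continuously to $r=R$ and $$U''+\Big(\frac{n-1}{r}+\frac r2\Big)U'-\frac\beta2U=\gamma U^{\gamma-1}\ \text{ in }(R,\infty),\qquad U(R)=U'(R)=0.$$ *)

theory Defs
  imports "HOL-Analysis.Analysis"
begin

end

theory Submission imports Defs begin

lemma ftc_real:
  fixes F f :: "real \<Rightarrow> real"
  assumes "a \<le> b" "continuous_on {a..b} F"
    "\<And>x. a < x \<Longrightarrow> x < b \<Longrightarrow> (F has_real_derivative f x) (at x)"
  shows "(f has_integral (F b - F a)) {a..b}"
  using assms by (intro fundamental_theorem_of_calculus_interior)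
     (auto simp: has_real_derivative_iff_has_vector_derivative[symmetric])

lemma deriv_shift_powr:
  fixes R s t p k :: real
  assumes "R < t"
  shows "((\<lambda>t. (t - R) powr p) has_real_derivative p * (t - R) powr (p - 1)) (at t)"
proof -
  have "((\<lambda>t. (t - R) powr p) has_real_derivative p * (t - R) powr (p - 1) * 1) (at t)"
    using assms by (intro DERIV_powr derivative_eq_intros) auto
  then show ?thesis by simp
qed

lemma cont_shift_powr:
  fixes R s t p k :: real
  assumes "p > 0"
  shows "continuous_on {R..} (\<lambda>t. (t - R) powr p)"
  apply (rule continuous_on_powr'[where f="\<lambda>t. t - R" and g="\<lambda>_. p"])
  using assms by (auto intro!: continuous_intros)

lemma int_shift_powr:
  fixes R s t p k :: real
  assumes "R \<le> s" "p > 0"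
  shows "((\<lambda>t. (t - R) powr (p - 1)) has_integral ((s - R) powr p / p)) {R..s}"
proof -
  have c: "continuous_on {R..s} (\<lambda>t. (t - R) powr p / p)"
      using continuous_on_subset[OF cont_shift_powr[OF assms(2)], of "{R..s}"] assms
      by (intro continuous_on_divide continuous_on_const) auto
  have d: "((\<lambda>t. (t - R) powr p / p) has_real_derivative (x - R) powr (p - 1)) (at x)"
    if "R < x" for x
  proof -
    have "((\<lambda>t. (t - R) powr p / p) has_real_derivative p * (x - R) powr (p - 1) / p) (at x)"
      using deriv_shift_powr[OF \<open>R < x\<close>, where p=p] by (rule DERIV_cdivide)
    then show ?thesis using assms by simp
  qed
  show ?thesis
    using ftc_real[of R s "\<lambda>t. (t - R) powr p / p" "\<lambda>t. (t - R) powr (p - 1)", OF assms(1) c d] assms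
    by simp
qed


lemma int_exp_shift:
  fixes R s t p k :: real
  assumes "R \<le> s" "k > 0"
  shows "((\<lambda>t. exp (k * (t - R))) has_integral ((exp (k * (s - R)) - 1) / k)) {R..s}"
proof -
  have c: "continuous_on {R..s} (\<lambda>t. exp (k * (t - R)) / k)"
    using assms by (intro continuous_intros) auto
  have d: "((\<lambda>t. exp (k * (t - R)) / k) has_real_derivative exp (k * (x - R))) (at x)" for x
  proof -
    have "((\<lambda>t. exp (k * (t - R)) / k) has_real_derivative exp (k * (x - R)) * (k * (1 - 0)) / k) (at x)"
      using assms by (intro derivative_eq_intros) auto
    then show ?thesis using assms by simp
  qed
  show ?thesis
    using ftc_real[of R s "\<lambda>t. exp (k * (t - R)) / k" "\<lambda>t. exp (k * (t - R))", OF assms(1) c d] assms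
    by (simp add: diff_divide_distrib)
qed

lemma spike_Icc_Ioc:
  fixes f :: "real \<Rightarrow> real" and R s :: real
  assumes "f R = 0"
  shows "(f has_integral y) {R..s} \<longleftrightarrow> (f has_integral y) {R<..s}"
  by (rule has_integral_spike_set_eq; rule negligible_subset[of "{R}"]) (use assms in auto)

lemma spike_Icc_Ioc':
  fixes f :: "real \<Rightarrow> real" and R s :: real
  shows "(f has_integral y) {R..s} \<longleftrightarrow> (f has_integral y) {R<..s}"
proof (rule has_integral_spike_set_eq)
  show "negligible {x \<in> {R..s} - {R<..s}. f x \<noteq> 0}"
    by (rule negligible_subset[of "{R}"]) auto
qed (rule negligible_subset[of "{}"], auto)

locale L =
  fixes n :: nat and R \<gamma> \<beta> k :: real
  assumes n1: "n \<ge> 1" and R0: "R > 0" and g0: "0 < \<gamma>" and g1: "\<gamma> < 1"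
    and bdef: "\<beta> = 2 / (2 - \<gamma>)" and k0: "k > 0"
begin

definition w :: "real \<Rightarrow> real" where "w t = t ^ (n - 1) * exp (t^2 / 4)"
definition rho :: "real \<Rightarrow> real" where "rho t = (t - R) powr \<beta> * exp (k * (t - R))"
definition hb :: "real \<Rightarrow> real \<Rightarrow> real \<Rightarrow> real" where
  "hb a b s = exp (k * (s - R)) * (a * (s - R) powr (\<beta> - 1) / (\<beta> - 1) + b * (s - R) powr \<beta> / k)"
definition II :: "(real \<Rightarrow> real) \<Rightarrow> real \<Rightarrow> real" where
  "II f s = integral {R..s} (\<lambda>t. w t * f t)"
definition PP :: "(real \<Rightarrow> real) \<Rightarrow> real \<Rightarrow> real" where
  "PP f r = integral {R..r} (\<lambda>s. II f s / w s)"

lemma b1: "\<beta> > 1" and b2: "\<beta> < 2"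
  using g0 g1 by (auto simp: bdef field_simps)

lemma w_pos: "t > 0 \<Longrightarrow> w t > 0"
  by (simp add: w_def)

lemma w_mono: "0 \<le> t \<Longrightarrow> t \<le> s \<Longrightarrow> w t \<le> w s"
  unfolding w_def
  by (intro mult_mono power_mono) (auto simp: power_mono)

lemma w_cont: "continuous_on S w"
  unfolding w_def by (intro continuous_intros) auto

lemma rho_nonneg: "rho t \<ge> 0"
  by (simp add: rho_def)

lemma powr_div_sq: "R < t \<Longrightarrow> (t - R) powr \<beta> / (t - R)^2 = (t - R) powr (\<beta> - 2)"
  by (simp add: powr_diff)

lemma w_deriv:
  assumes t: "t > 0"
  shows "(w has_real_derivative w t * ((real n - 1) / t + t / 2)) (at t)"
proof -
  have d: "(w has_real_derivative (real (n - 1) * t ^ (n - 1 - 1) * exp (t^2 / 4) + t ^ (n - 1) * (exp (t^2 / 4) * (2 * t / 4)))) (at t)"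
    unfolding w_def by (auto intro!: derivative_eq_intros simp: power2_eq_square)
  have "real (n - 1) * t ^ (n - 1 - 1) = t ^ (n - 1) * ((real n - 1) / t)"
  proof (cases "n - 1")
    case 0 then show ?thesis using n1 by simp
  next
    case (Suc j)
    then have "real n = real j + 2" using n1 by linarith
    then show ?thesis using Suc t by (simp add: field_simps)
  qed
  then have "real (n - 1) * t ^ (n - 1 - 1) * exp (t^2 / 4) + t ^ (n - 1) * (exp (t^2 / 4) * (2 * t / 4))
      = w t * ((real n - 1) / t + t / 2)"
    by (simp add: w_def algebra_simps)
  then show ?thesis using d by simp
qed

lemma shift_tendsto: "((\<lambda>s. s - R) \<longlongrightarrow> 0) (at_right R)"
proof -
  have "((\<lambda>s. s - R) \<longlongrightarrow> R - R) (at_right R)" by (intro tendsto_intros)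
  then show ?thesis by simp
qed

lemma shift_powr_tendsto: "p > 0 \<Longrightarrow> ((\<lambda>s. (s - R) powr p) \<longlongrightarrow> 0) (at_right R)"
proof -
  assume p: "p > 0"
  have ev: "eventually (\<lambda>s. 0 \<le> s - R) (at_right R)"
    using eventually_at_right_less[of R] by (auto elim: eventually_mono)
  show ?thesis by (rule tendsto_zero_powrI[OF shift_tendsto tendsto_const ev p])
qed

lemma exp_tendsto: "((\<lambda>s. exp (k * (s - R))) \<longlongrightarrow> 1) (at_right R)"
  using tendsto_exp[OF tendsto_mult[OF tendsto_const shift_tendsto, of k]] by simp

lemma rho_tendsto: "(rho \<longlongrightarrow> 0) (at_right R)"
  unfolding rho_def using tendsto_mult[OF shift_powr_tendsto exp_tendsto] b1 by simp

lemma hb_tendsto: "(hb a b \<longlongrightarrow> 0) (at_right R)"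
proof -
  have "((\<lambda>s. exp (k * (s - R)) * (a * (s - R) powr (\<beta> - 1) / (\<beta> - 1) + b * (s - R) powr \<beta> / k))
        \<longlongrightarrow> 1 * (a * 0 / (\<beta> - 1) + b * 0 / k)) (at_right R)"
    using b1 k0 by (intro tendsto_intros exp_tendsto shift_powr_tendsto) auto
  then show ?thesis unfolding hb_def[abs_def] by simp
qed

context
  fixes f :: "real \<Rightarrow> real" and a b :: real
  assumes fc: "continuous_on {R<..} f" and f0: "f R = 0" and a0: "a \<ge> 0" and b0: "b \<ge> 0"
    and fb: "\<And>t. R < t \<Longrightarrow> \<bar>f t\<bar> \<le> (a / (t - R)^2 + b) * rho t"
begin

lemma inner_pt:
  assumes "R < t" "t \<le> s"
  shows "\<bar>w t * f t\<bar> \<le> w s * (exp (k * (s - R)) * a * (t - R) powr (\<beta> - 2) + b * (s - R) powr \<beta> * exp (k * (t - R)))"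
proof -
  have wt: "0 < w t" "w t \<le> w s" using assms R0 by (auto intro: w_pos w_mono)
  have "(a / (t - R)^2 + b) * rho t = a * ((t - R) powr \<beta> / (t - R)^2) * exp (k * (t - R)) + b * (t - R) powr \<beta> * exp (k * (t - R))"
    by (simp add: rho_def algebra_simps)
  also have "\<dots> = a * (t - R) powr (\<beta> - 2) * exp (k * (t - R)) + b * (t - R) powr \<beta> * exp (k * (t - R))"
    using powr_div_sq[OF assms(1)] by simp
  also have "\<dots> \<le> exp (k * (s - R)) * a * (t - R) powr (\<beta> - 2) + b * (s - R) powr \<beta> * exp (k * (t - R))"
  proof (rule add_mono)
    show "a * (t - R) powr (\<beta> - 2) * exp (k * (t - R)) \<le> exp (k * (s - R)) * a * (t - R) powr (\<beta> - 2)"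
    proof -
      have e: "exp (k*(t-R)) \<le> exp (k*(s-R))" using assms k0 by simp
      have "a * (t - R) powr (\<beta> - 2) * exp (k * (t - R)) \<le> a * (t - R) powr (\<beta> - 2) * exp (k * (s - R))"
        by (intro mult_left_mono e) (use a0 in auto)
      then show ?thesis by (simp add: mult_ac)
    qed
    show "b * (t - R) powr \<beta> * exp (k * (t - R)) \<le> b * (s - R) powr \<beta> * exp (k * (t - R))"
      using assms b0 b1 by (intro mult_right_mono mult_left_mono powr_mono2) auto
  qed
  finally have ft: "\<bar>f t\<bar> \<le> exp (k * (s - R)) * a * (t - R) powr (\<beta> - 2) + b * (s - R) powr \<beta> * exp (k * (t - R))"
    using fb[OF assms(1)] by linarith
  have "\<bar>w t * f t\<bar> = w t * \<bar>f t\<bar>" using wt by (simp add: abs_mult)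
  also have "\<dots> \<le> w s * \<bar>f t\<bar>" using wt by (intro mult_right_mono) auto
  also have "\<dots> \<le> w s * (exp (k * (s - R)) * a * (t - R) powr (\<beta> - 2) + b * (s - R) powr \<beta> * exp (k * (t - R)))"
    using ft wt by (intro mult_left_mono) auto
  finally show ?thesis .
qed

lemma inner_int:
  assumes "R \<le> s"
  shows "((\<lambda>t. w s * (exp (k * (s - R)) * a * (t - R) powr (\<beta> - 2) + b * (s - R) powr \<beta> * exp (k * (t - R))))
     has_integral (w s * (exp (k * (s - R)) * a * ((s - R) powr (\<beta> - 1) / (\<beta> - 1)) + b * (s - R) powr \<beta> * ((exp (k * (s - R)) - 1) / k)))) {R..s}"
proof -
  have p: "((\<lambda>t. (t - R) powr (\<beta> - 2)) has_integral ((s - R) powr (\<beta> - 1) / (\<beta> - 1))) {R..s}"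
    using int_shift_powr[OF assms, of "\<beta> - 1"] b1 by (simp add: algebra_simps)
  show ?thesis
    by (intro has_integral_mult_right has_integral_add p int_exp_shift assms k0)
qed

lemma wf_cont: "continuous_on {R<..s} (\<lambda>t. w t * f t)"
  by (intro continuous_intros w_cont continuous_on_subset[OF fc]) auto

lemma inner_main:
  assumes s: "R \<le> s"
  shows "(\<lambda>t. w t * f t) integrable_on {R..s}" and "\<bar>II f s\<bar> \<le> w s * hb a b s"
proof -
  define g where "g t = w s * (exp (k * (s - R)) * a * (t - R) powr (\<beta> - 2) + b * (s - R) powr \<beta> * exp (k * (t - R)))" for t
  define V where "V = w s * (exp (k * (s - R)) * a * ((s - R) powr (\<beta> - 1) / (\<beta> - 1)) + b * (s - R) powr \<beta> * ((exp (k * (s - R)) - 1) / k))"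
  have gI: "(g has_integral V) {R..s}" unfolding g_def V_def by (rule inner_int[OF s])
  then have gI': "(g has_integral V) {R<..s}" by (simp add: spike_Icc_Ioc')
  have meas: "(\<lambda>t. w t * f t) \<in> borel_measurable (lebesgue_on {R<..s})"
    by (rule continuous_imp_measurable_on_sets_lebesgue[OF wf_cont]) auto
  have bd: "norm (w t * f t) \<le> g t" if "t \<in> {R<..s}" for t
    using inner_pt[of t s] that unfolding g_def by auto
  have int': "(\<lambda>t. w t * f t) integrable_on {R<..s}"
    by (rule measurable_bounded_by_integrable_imp_integrable_real[OF meas _ _])
       (use gI' bd in auto)
  then obtain y where y: "((\<lambda>t. w t * f t) has_integral y) {R<..s}" by blast
  then have y': "((\<lambda>t. w t * f t) has_integral y) {R..s}"
    by (subst spike_Icc_Ioc) (auto simp: f0)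
  then show "(\<lambda>t. w t * f t) integrable_on {R..s}" by blast
  have "II f s = integral {R<..s} (\<lambda>t. w t * f t)"
    using y y' by (simp add: II_def integral_unique)
  also have "norm \<dots> \<le> V"
    by (rule integral_norm_bound_integral'[OF bd meas _ gI']) auto
  finally have "\<bar>II f s\<bar> \<le> V" by simp
  also have "V \<le> w s * hb a b s"
  proof -
    have ws: "w s > 0" using s R0 w_pos by auto
    have "b * (s - R) powr \<beta> * ((exp (k * (s - R)) - 1) / k) \<le> b * (s - R) powr \<beta> * (exp (k * (s - R)) / k)"
      using b0 k0 by (intro mult_left_mono divide_right_mono) auto
    then show ?thesis unfolding V_def hb_def using ws
      by (intro mult_left_mono) (auto simp: algebra_simps)
  qed
  finally show "\<bar>II f s\<bar> \<le> w s * hb a b s" .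
qed

lemma II_cont: "continuous_on {R..r} (II f)"
proof (cases "R \<le> r")
  case True
  show ?thesis unfolding II_def
    by (rule indefinite_integral_continuous_1[OF inner_main(1)[OF True]])
qed auto

lemma IIw_cont: "continuous_on {R..r} (\<lambda>s. II f s / w s)"
proof -
  have "w s \<noteq> 0" if "s \<in> {R..r}" for s using w_pos[of s] that R0 by auto
  then show ?thesis by (intro continuous_intros II_cont w_cont) auto
qed

lemma II_deriv:
  assumes s: "R < s"
  shows "(II f has_real_derivative w s * f s) (at s)"
proof -
  define c where "c = (R + s) / 2"
  have c: "R < c" "c < s" using s by (auto simp: c_def)
  have cont: "continuous_on {c..s+1} (\<lambda>t. w t * f t)"
    by (rule continuous_on_subset[OF wf_cont[of "s+1"]]) (use c in auto)
  have "((\<lambda>x. integral {c..x} (\<lambda>t. w t * f t)) has_real_derivative w s * f s) (at s within {c..s+1})"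
    by (rule integral_has_real_derivative[OF cont]) (use c in auto)
  moreover have "at s within {c..s+1} = at s"
    by (rule at_within_interior) (use c in auto)
  ultimately have d: "((\<lambda>x. integral {c..x} (\<lambda>t. w t * f t)) has_real_derivative w s * f s) (at s)" by simp
  have d2: "((\<lambda>x. II f c + integral {c..x} (\<lambda>t. w t * f t)) has_real_derivative w s * f s) (at s)"
    using DERIV_add[OF DERIV_const d] by simp
  show ?thesis
  proof (rule has_field_derivative_transform_within_open[OF d2, of "{c<..}"])
    fix x assume x: "x \<in> {c<..}"
    have "integral {R..c} (\<lambda>t. w t * f t) + integral {c..x} (\<lambda>t. w t * f t) = integral {R..x} (\<lambda>t. w t * f t)"
      using Henstock_Kurzweil_Integration.integral_combine[where a=R and c=c and b=x and f="\<lambda>t. w t * f t"] c x inner_main(1)[of x] by auto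
    then show "II f c + integral {c..x} (\<lambda>t. w t * f t) = II f x" by (simp add: II_def)
  qed (use c in auto)
qed

lemma PP_deriv:
  assumes r: "R < r"
  shows "(PP f has_real_derivative II f r / w r) (at r)"
proof -
  have "(PP f has_real_derivative II f r / w r) (at r within {R..r+1})"
    unfolding PP_def by (rule integral_has_real_derivative[OF IIw_cont]) (use r in auto)
  moreover have "at r within {R..r+1} = at r"
    by (rule at_within_interior) (use r in auto)
  ultimately show ?thesis by simp
qed

lemma outer_main:
  assumes r: "R \<le> r"
  shows "\<bar>PP f r\<bar> \<le> (a / (\<beta> * (\<beta> - 1)) + b / k^2) * rho r"
proof -
  define H where "H s = (exp (k * (r - R)) * a / (\<beta> - 1)) * (s - R) powr (\<beta> - 1) + (b * (r - R) powr \<beta> / k) * exp (k * (s - R))" for s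
  define V where "V = (exp (k * (r - R)) * a / (\<beta> - 1)) * ((r - R) powr \<beta> / \<beta>) + (b * (r - R) powr \<beta> / k) * ((exp (k * (r - R)) - 1) / k)"
  have HI: "(H has_integral V) {R..r}"
    unfolding H_def V_def
    by (intro has_integral_add has_integral_mult_right int_exp_shift[OF r k0] int_shift_powr[OF r, of \<beta>, simplified])
       (use b1 in auto)
  have meas: "(\<lambda>s. II f s / w s) \<in> borel_measurable (lebesgue_on {R..r})"
    by (rule continuous_imp_measurable_on_sets_lebesgue[OF IIw_cont]) auto
  have bd: "norm (II f s / w s) \<le> H s" if "s \<in> {R..r}" for s
  proof -
    have ws: "w s > 0" using that R0 w_pos by auto
    have "\<bar>II f s / w s\<bar> = \<bar>II f s\<bar> / w s" using ws by simp
    also have "\<dots> \<le> hb a b s" using inner_main(2)[of s] that ws by (simp add: divide_le_eq mult.commute)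
    also have "\<dots> \<le> H s"
    proof -
      have e: "exp (k * (s - R)) \<le> exp (k * (r - R))" using that k0 by simp
      have p: "(s - R) powr \<beta> \<le> (r - R) powr \<beta>" using that b1 by (intro powr_mono2) auto
      have "exp (k * (s - R)) * (a * (s - R) powr (\<beta> - 1) / (\<beta> - 1)) \<le> exp (k * (r - R)) * (a * (s - R) powr (\<beta> - 1) / (\<beta> - 1))"
        using e a0 b1 by (intro mult_right_mono) auto
      moreover have "exp (k * (s - R)) * (b * (s - R) powr \<beta> / k) \<le> exp (k * (s - R)) * (b * (r - R) powr \<beta> / k)"
        using p b0 k0 by (intro mult_left_mono divide_right_mono) auto
      ultimately show ?thesis unfolding hb_def H_def by (simp add: algebra_simps)
    qed
    finally show ?thesis by simp
  qed
  have "\<bar>PP f r\<bar> \<le> V"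
    unfolding PP_def using integral_norm_bound_integral'[OF bd meas _ HI] by auto
  also have "V \<le> (a / (\<beta> * (\<beta> - 1)) + b / k^2) * rho r"
  proof -
    have "(b * (r - R) powr \<beta> / k) * ((exp (k * (r - R)) - 1) / k) \<le> (b * (r - R) powr \<beta> / k) * (exp (k * (r - R)) / k)"
      using b0 k0 by (intro mult_left_mono divide_right_mono) auto
    then show ?thesis unfolding V_def rho_def by (simp add: algebra_simps power2_eq_square)
  qed
  finally show ?thesis .
qed

end

end


locale M = L +
  fixes c1 \<delta> :: real
  assumes c1pos: "c1 > 0" and dpos: "\<delta> > 0" and Dpos: "\<beta> * \<delta>^2 / 4 < 1"
    and A4: "c1 \<le> (\<gamma> / (\<beta> * (\<beta> - 1))) * c1 powr (\<gamma> - 1) / (1 - \<beta> * \<delta>^2 / 4)"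
    and A5: "c1 \<le> ((R ^ (n - 1) * exp (R^2 / 4)) / ((R + \<delta>) ^ (n - 1) * exp ((R + \<delta>)^2 / 4))) * (\<gamma> / (\<beta> * (\<beta> - 1)))
                 * ((\<gamma> / (\<beta> * (\<beta> - 1))) * c1 powr (\<gamma> - 1) / (1 - \<beta> * \<delta>^2 / 4)) powr (\<gamma> - 1)"
    and A6: "\<gamma> * (1 - \<gamma>) * c1 powr (\<gamma> - 2) / (\<beta> * (\<beta> - 1)) + (\<beta> / 2 + \<gamma> * (1 - \<gamma>) * c1 powr (\<gamma> - 2) / \<delta>^2) / k^2 < 1"
begin

definition E where "E = \<gamma> / (\<beta> * (\<beta> - 1))"
definition D where "D = 1 - \<beta> * \<delta>^2 / 4"
definition c2 where "c2 = E * c1 powr (\<gamma> - 1) / D"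
definition a0 where "a0 = \<gamma> * (1 - \<gamma>) * c1 powr (\<gamma> - 2)"
definition BB where "BB = \<beta> / 2 + a0 / \<delta>^2"
definition \<theta> where "\<theta> = a0 / (\<beta> * (\<beta> - 1)) + BB / k^2"
definition m where "m t = c1 * (min (t - R) \<delta>) powr \<beta>"
definition F where "F v = \<beta> / 2 * v + \<gamma> * v powr (\<gamma> - 1)"
definition uu where "uu V t = rho t * apply_bcontfun V (ln (t - R))"
definition G where "G V t = (if R < t then F (max (uu V t) (m t)) else 0)"
definition K0 where "K0 = \<beta> / 2 * c1 * \<delta> powr \<beta> + \<gamma> * c1 powr (\<gamma> - 1) * \<delta> powr (\<beta> - 2)"

lemma theta_lt1: "\<theta> < 1"
  using A6 by (simp add: \<theta>_def a0_def BB_def)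
lemma a0_pos: "a0 > 0"
  using g0 g1 c1pos by (simp add: a0_def)
lemma BB_pos: "BB > 0"
  unfolding BB_def using a0_pos b1 dpos by (intro add_pos_nonneg) auto

lemma w_ratio: "w R / w (R + \<delta>) = (R ^ (n - 1) * exp (R^2 / 4)) / ((R + \<delta>) ^ (n - 1) * exp ((R + \<delta>)^2 / 4))"
  by (simp add: w_def)

lemma c1_le_c2: "c1 \<le> c2" using A4 by (simp add: c2_def E_def D_def)
lemma A5': "c1 \<le> (w R / w (R + \<delta>)) * E * c2 powr (\<gamma> - 1)"
  using A5 by (simp add: w_ratio c2_def E_def D_def)
lemma D_pos: "D > 0" and D_le1: "D \<le> 1" using Dpos b1 by (auto simp: D_def)
lemma E_pos: "E > 0" using g0 b1 by (simp add: E_def)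
lemma c2_pos: "c2 > 0" using E_pos D_pos c1pos by (simp add: c2_def)

lemma bg1: "\<beta> * (\<gamma> - 1) = \<beta> - 2" and bg2: "\<beta> * (\<gamma> - 2) = -2"
  using g0 g1 by (auto simp: bdef field_simps)

lemma m_pos: "R < t \<Longrightarrow> m t > 0"
  using c1pos dpos by (simp add: m_def)

lemma m_le: "R < t \<Longrightarrow> m t \<le> c1 * \<delta> powr \<beta>"
  using c1pos dpos b1 by (auto simp: m_def intro!: powr_mono2)

lemma m_small: "R < t \<Longrightarrow> t - R \<le> \<delta> \<Longrightarrow> m t = c1 * (t - R) powr \<beta>"
  by (simp add: m_def)

lemma m_large: "\<delta> \<le> t - R \<Longrightarrow> m t = c1 * \<delta> powr \<beta>"
  by (simp add: m_def)

lemma m_mono: "R < t \<Longrightarrow> t \<le> r \<Longrightarrow> m t \<le> m r"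
  using c1pos dpos b1 by (auto simp: m_def intro!: powr_mono2 mult_left_mono)

lemma m_pow1: "R < t \<Longrightarrow> m t powr (\<gamma> - 1) = c1 powr (\<gamma> - 1) * (min (t - R) \<delta>) powr (\<beta> - 2)"
  using c1pos dpos by (simp add: m_def powr_mult powr_powr bg1)

lemma m_pow2: "R < t \<Longrightarrow> m t powr (\<gamma> - 2) = c1 powr (\<gamma> - 2) / (min (t - R) \<delta>)^2"
proof -
  assume t: "R < t"
  have "m t powr (\<gamma> - 2) = c1 powr (\<gamma> - 2) * (min (t - R) \<delta>) powr (-2)"
    using c1pos dpos t by (simp add: m_def powr_mult powr_powr bg2)
  also have "(min (t - R) \<delta>) powr (-2) = 1 / (min (t - R) \<delta>)^2"
    using dpos t by (simp add: powr_minus divide_inverse)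
  finally show ?thesis by simp
qed

lemma min_pow_le: "R < t \<Longrightarrow> (min (t - R) \<delta>) powr (\<beta> - 2) \<le> (t - R) powr (\<beta> - 2) + \<delta> powr (\<beta> - 2)"
  by (cases "t - R \<le> \<delta>") (auto simp: min_def)

lemma min_sq_le: "R < t \<Longrightarrow> 1 / (min (t - R) \<delta>)^2 \<le> 1 / (t - R)^2 + 1 / \<delta>^2"
  by (cases "t - R \<le> \<delta>") (auto simp: min_def)

lemma pow_le_rho: "R < t \<Longrightarrow> (t - R) powr (\<beta> - 2) \<le> (1 / (t - R)^2) * rho t"
proof -
  assume t: "R < t"
  have "(t - R) powr (\<beta> - 2) = (t - R) powr \<beta> / (t - R)^2" using powr_div_sq[OF t] by simp
  also have "\<dots> \<le> (t - R) powr \<beta> * exp (k * (t - R)) / (t - R)^2"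
    using t k0 by (intro divide_right_mono) auto
  finally show ?thesis by (simp add: rho_def)
qed

lemma one_le_rho: "R < t \<Longrightarrow> 1 \<le> (1 / (t - R)^2 + 1) * rho t"
proof -
  assume t: "R < t"
  have r: "(t - R) powr \<beta> \<le> rho t" using t k0 by (simp add: rho_def)
  show ?thesis
  proof (cases "t - R \<le> 1")
    case True
    have "1 \<le> (t - R) powr (\<beta> - 2)"
    proof -
      have "0 \<le> (\<beta> - 2) * ln (t - R)" using True t b2 by (intro mult_nonpos_nonpos) auto
      then show ?thesis using t by (simp add: powr_def)
    qed
    also have "\<dots> \<le> (1 / (t - R)^2) * rho t" by (rule pow_le_rho[OF t])
    also have "\<dots> \<le> (1 / (t - R)^2 + 1) * rho t" using rho_nonneg[of t] by (simp add: distrib_right)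
    finally show ?thesis .
  next
    case False
    have "1 \<le> (t - R) powr \<beta>" using False b1 by (intro ge_one_powr_ge_zero) auto
    also have "\<dots> \<le> rho t" by (rule r)
    also have "\<dots> \<le> (1 / (t - R)^2 + 1) * rho t" using rho_nonneg[of t] t by (simp add: distrib_right)
    finally show ?thesis .
  qed
qed

lemma F_pos: "v > 0 \<Longrightarrow> F v > 0"
  unfolding F_def using b1 g0 by (intro add_pos_pos mult_pos_pos) auto

lemma powr_lip:
  assumes mu: "0 < \<mu>" "\<mu> \<le> x" "\<mu> \<le> y"
  shows "\<bar>x powr (\<gamma> - 1) - y powr (\<gamma> - 1)\<bar> \<le> (1 - \<gamma>) * \<mu> powr (\<gamma> - 2) * \<bar>x - y\<bar>"
proof -
  define L where "L = (1 - \<gamma>) * \<mu> powr (\<gamma> - 2)"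
  have main: "a powr (\<gamma> - 1) - b powr (\<gamma> - 1) \<le> L * (b - a)" if ab: "\<mu> \<le> a" "a \<le> b" for a b
  proof -
    define \<phi> where "\<phi> z = z powr (\<gamma> - 1) + L * z" for z
    have "\<phi> a \<le> \<phi> b"
    proof (rule DERIV_nonneg_imp_increasing_open[OF ab(2)])
      fix z assume z: "a < z" "z < b"
      then have zp: "z > 0" using ab mu by auto
      have "(\<phi> has_real_derivative (\<gamma> - 1) * z powr (\<gamma> - 1 - 1) + L) (at z)"
        unfolding \<phi>_def using zp by (auto intro!: derivative_eq_intros)
      moreover have "(\<gamma> - 1) * z powr (\<gamma> - 1 - 1) + L \<ge> 0"
      proof -
        have "z powr (\<gamma> - 2) \<le> \<mu> powr (\<gamma> - 2)"
          using z ab mu g1 by (intro powr_mono2') auto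
        then have "(1 - \<gamma>) * z powr (\<gamma> - 2) \<le> (1 - \<gamma>) * \<mu> powr (\<gamma> - 2)"
          using g1 by (intro mult_left_mono) auto
        then show ?thesis by (simp add: L_def algebra_simps)
      qed
      ultimately show "\<exists>y. (\<phi> has_real_derivative y) (at z) \<and> 0 \<le> y" by blast
    next
      have "\<forall>z\<in>{a..b}. z \<noteq> 0" using ab mu by auto
      then show "continuous_on {a..b} \<phi>" unfolding \<phi>_def by (intro continuous_intros) auto
    qed
    then show ?thesis by (simp add: \<phi>_def algebra_simps)
  qed
  have mono: "b powr (\<gamma> - 1) \<le> a powr (\<gamma> - 1)" if ab: "\<mu> \<le> a" "a \<le> b" for a b
    using ab mu g1 by (intro powr_mono2') auto
  show ?thesis
  proof (cases "x \<le> y")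
    case True
    then show ?thesis using main[OF mu(2) True] mono[OF mu(2) True] by (simp add: L_def abs_if)
  next
    case False
    then show ?thesis using main[OF mu(3), of x] mono[OF mu(3), of x] by (simp add: L_def abs_if)
  qed
qed

lemma F_lip:
  assumes "0 < \<mu>" "\<mu> \<le> x" "\<mu> \<le> y"
  shows "\<bar>F x - F y\<bar> \<le> (\<beta> / 2 + \<gamma> * (1 - \<gamma>) * \<mu> powr (\<gamma> - 2)) * \<bar>x - y\<bar>"
proof -
  have "F x - F y = \<beta> / 2 * (x - y) + \<gamma> * (x powr (\<gamma> - 1) - y powr (\<gamma> - 1))"
    by (simp add: F_def field_simps)
  then have "\<bar>F x - F y\<bar> = \<bar>\<beta> / 2 * (x - y) + \<gamma> * (x powr (\<gamma> - 1) - y powr (\<gamma> - 1))\<bar>"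
    by simp
  also have "\<dots> \<le> \<beta> / 2 * \<bar>x - y\<bar> + \<gamma> * \<bar>x powr (\<gamma> - 1) - y powr (\<gamma> - 1)\<bar>"
    using b1 g0 by (simp add: abs_mult abs_triangle_ineq[THEN order_trans])
  also have "\<dots> \<le> \<beta> / 2 * \<bar>x - y\<bar> + \<gamma> * ((1 - \<gamma>) * \<mu> powr (\<gamma> - 2) * \<bar>x - y\<bar>)"
    using powr_lip[OF assms] g0 by (intro add_left_mono mult_left_mono) auto
  finally show ?thesis by (simp add: algebra_simps)
qed


lemma rho_cont: "continuous_on {R<..} rho"
proof -
  have "\<forall>t\<in>{R<..}. t - R \<noteq> 0" by auto
  then show ?thesis unfolding rho_def by (intro continuous_intros) auto
qed

lemma rho_pos: "R < t \<Longrightarrow> rho t > 0"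
  by (simp add: rho_def)

lemma m_cont: "continuous_on {R<..} m"
proof -
  have "\<forall>t\<in>{R<..}. min (t - R) \<delta> \<noteq> 0" using dpos by auto
  then show ?thesis unfolding m_def by (intro continuous_intros) auto
qed

lemma uu_cont: "continuous_on {R<..} (uu V)"
proof -
  have "continuous_on {R<..} (\<lambda>t. apply_bcontfun V (ln (t - R)))"
    by (rule continuous_on_compose2[OF continuous_on_apply_bcontfun[of UNIV V]])
       (auto intro!: continuous_intros)
  then show ?thesis unfolding uu_def by (intro continuous_intros rho_cont)
qed

lemma max_pos: "R < t \<Longrightarrow> max (uu V t) (m t) > 0"
  using m_pos[of t] by auto

lemma G_eq: "R < t \<Longrightarrow> G V t = F (max (uu V t) (m t))"
  by (simp add: G_def)

lemma G_R: "G V R = 0"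
  by (simp add: G_def)

lemma G_cont: "continuous_on {R<..} (G V)"
proof -
  have "\<forall>t\<in>{R<..}. max (uu V t) (m t) \<noteq> 0"
  proof
    fix t :: real assume "t \<in> {R<..}"
    then show "max (uu V t) (m t) \<noteq> 0" using max_pos[of t V] by auto
  qed
  then have "continuous_on {R<..} (\<lambda>t. F (max (uu V t) (m t)))"
    unfolding F_def by (intro continuous_intros uu_cont m_cont) auto
  then show ?thesis by (rule continuous_on_eq) (simp add: G_def)
qed

lemma G_pos: "R < t \<Longrightarrow> G V t > 0"
  using F_pos max_pos by (simp add: G_def)

lemma uu_bound: "R < t \<Longrightarrow> \<bar>uu V t\<bar> \<le> rho t * norm V"
proof -
  assume t: "R < t"
  have "\<bar>apply_bcontfun V (ln (t - R))\<bar> \<le> norm V" using norm_bounded[of V] by simp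
  then show ?thesis unfolding uu_def using rho_pos[OF t] by (simp add: abs_mult mult_left_mono)
qed

lemma G_bound:
  assumes t: "R < t"
  shows "\<bar>G V t\<bar> \<le> ((\<gamma> * c1 powr (\<gamma> - 1) + K0) / (t - R)^2 + (\<beta> / 2 * norm V + K0)) * rho t"
proof -
  define X where "X = max (uu V t) (m t)"
  have Xp: "X > 0" "m t \<le> X" using max_pos[OF t] by (auto simp: X_def)
  have X1: "X \<le> rho t * norm V + c1 * \<delta> powr \<beta>"
    using uu_bound[OF t, of V] m_le[OF t] m_pos[OF t] rho_pos[OF t] unfolding X_def by auto
  have X2: "X powr (\<gamma> - 1) \<le> c1 powr (\<gamma> - 1) * ((t - R) powr (\<beta> - 2) + \<delta> powr (\<beta> - 2))"
  proof -
    have "X powr (\<gamma> - 1) \<le> m t powr (\<gamma> - 1)"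
      using Xp m_pos[OF t] g1 by (intro powr_mono2') auto
    also have "\<dots> = c1 powr (\<gamma> - 1) * (min (t - R) \<delta>) powr (\<beta> - 2)" by (rule m_pow1[OF t])
    also have "\<dots> \<le> c1 powr (\<gamma> - 1) * ((t - R) powr (\<beta> - 2) + \<delta> powr (\<beta> - 2))"
      using min_pow_le[OF t] by (intro mult_left_mono) auto
    finally show ?thesis .
  qed
  have "\<bar>G V t\<bar> = \<beta> / 2 * X + \<gamma> * X powr (\<gamma> - 1)"
    using G_pos[OF t, of V] by (simp add: G_def F_def X_def t)
  also have "\<dots> \<le> \<beta> / 2 * (rho t * norm V + c1 * \<delta> powr \<beta>) + \<gamma> * (c1 powr (\<gamma> - 1) * ((t - R) powr (\<beta> - 2) + \<delta> powr (\<beta> - 2)))"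
    using X1 X2 b1 g0 by (intro add_mono mult_left_mono) auto
  also have "\<dots> = \<beta> / 2 * norm V * rho t + K0 + \<gamma> * c1 powr (\<gamma> - 1) * (t - R) powr (\<beta> - 2)"
    by (simp add: K0_def algebra_simps)
  also have "\<dots> \<le> \<beta> / 2 * norm V * rho t + K0 * ((1 / (t - R)^2 + 1) * rho t) + \<gamma> * c1 powr (\<gamma> - 1) * ((1 / (t - R)^2) * rho t)"
  proof -
    have K0: "K0 \<ge> 0" unfolding K0_def using b1 g0 c1pos by auto
    show ?thesis
      using mult_left_mono[OF one_le_rho[OF t] K0] mult_left_mono[OF pow_le_rho[OF t], of "\<gamma> * c1 powr (\<gamma> - 1)"] g0
      by (intro add_mono) auto
  qed
  also have "\<dots> = ((\<gamma> * c1 powr (\<gamma> - 1) + K0) / (t - R)^2 + (\<beta> / 2 * norm V + K0)) * rho t"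
    by (simp add: algebra_simps add_divide_distrib)
  finally show ?thesis .
qed

lemma G_lip:
  assumes t: "R < t"
  shows "\<bar>G V t - G W t\<bar> \<le> (a0 / (t - R)^2 + BB) * rho t * dist V W"
proof -
  define X where "X = max (uu V t) (m t)"
  define Y where "Y = max (uu W t) (m t)"
  have mp: "m t > 0" by (rule m_pos[OF t])
  have XY: "m t \<le> X" "m t \<le> Y" by (auto simp: X_def Y_def)
  have d: "\<bar>X - Y\<bar> \<le> rho t * dist V W"
  proof -
    have "\<bar>X - Y\<bar> \<le> \<bar>uu V t - uu W t\<bar>" unfolding X_def Y_def by (auto simp: max_def)
    also have "\<dots> = rho t * \<bar>apply_bcontfun V (ln (t - R)) - apply_bcontfun W (ln (t - R))\<bar>"
      using rho_pos[OF t] by (simp add: uu_def abs_mult right_diff_distrib[symmetric])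
    also have "\<dots> \<le> rho t * dist V W"
      using dist_bounded[of V "ln (t - R)" W] rho_pos[OF t] by (intro mult_left_mono) (auto simp: dist_real_def)
    finally show ?thesis .
  qed
  have coef: "\<beta> / 2 + \<gamma> * (1 - \<gamma>) * m t powr (\<gamma> - 2) \<le> a0 / (t - R)^2 + BB"
  proof -
    have "\<gamma> * (1 - \<gamma>) * m t powr (\<gamma> - 2) = a0 * (1 / (min (t - R) \<delta>)^2)"
      by (simp add: m_pow2[OF t] a0_def)
    also have "\<dots> \<le> a0 * (1 / (t - R)^2 + 1 / \<delta>^2)"
      using min_sq_le[OF t] a0_pos by (intro mult_left_mono) auto
    finally show ?thesis by (simp add: BB_def algebra_simps)
  qed
  have "\<bar>G V t - G W t\<bar> = \<bar>F X - F Y\<bar>" by (simp add: G_def t X_def Y_def)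
  also have "\<dots> \<le> (\<beta> / 2 + \<gamma> * (1 - \<gamma>) * m t powr (\<gamma> - 2)) * \<bar>X - Y\<bar>"
    by (rule F_lip[OF mp XY])
  also have "\<dots> \<le> (a0 / (t - R)^2 + BB) * (rho t * dist V W)"
    using coef d b1 g0 g1 a0_pos BB_pos by (intro mult_mono) auto
  finally show ?thesis by (simp add: mult_ac)
qed


definition aG where "aG = \<gamma> * c1 powr (\<gamma> - 1) + K0"
definition bG where "bG V = \<beta> / 2 * norm V + K0"
definition TT where "TT V = Bcontfun (\<lambda>x. PP (G V) (R + exp x) / rho (R + exp x))"

lemma K0_nonneg: "K0 \<ge> 0" unfolding K0_def using b1 g0 c1pos by auto
lemma aG0: "aG \<ge> 0" unfolding aG_def using K0_nonneg g0 c1pos by auto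
lemma bG0: "bG V \<ge> 0" unfolding bG_def using K0_nonneg b1 by auto

lemma G_bound': "R < t \<Longrightarrow> \<bar>G V t\<bar> \<le> (aG / (t - R)^2 + bG V) * rho t"
  unfolding aG_def bG_def by (rule G_bound)

lemmas GIL = G_cont G_R aG0 bG0 G_bound'

lemma D_cont: "continuous_on {R<..} (\<lambda>t. G V t - G W t)"
  by (intro continuous_intros G_cont)
lemma D_R: "G V R - G W R = 0" by (simp add: G_R)
lemma D_a0: "a0 * dist V W \<ge> 0" and D_b0: "BB * dist V W \<ge> 0"
  using a0_pos BB_pos by auto
lemma D_bound: "R < t \<Longrightarrow> \<bar>G V t - G W t\<bar> \<le> ((a0 * dist V W) / (t - R)^2 + BB * dist V W) * rho t"
  using G_lip[of t V W] by (simp add: algebra_simps)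

lemmas DIL = D_cont D_R D_a0 D_b0 D_bound

lemma II_G_diff:
  assumes "R \<le> s"
  shows "II (\<lambda>t. G V t - G W t) s = II (G V) s - II (G W) s"
proof -
  have "II (\<lambda>t. G V t - G W t) s = integral {R..s} (\<lambda>t. w t * G V t - w t * G W t)"
    by (simp add: II_def algebra_simps)
  also have "\<dots> = II (G V) s - II (G W) s"
    unfolding II_def
    by (rule Henstock_Kurzweil_Integration.integral_diff; rule inner_main(1)[OF GIL assms])
  finally show ?thesis .
qed

lemma PP_G_diff:
  assumes "R \<le> r"
  shows "PP (\<lambda>t. G V t - G W t) r = PP (G V) r - PP (G W) r"
proof -
  have "PP (\<lambda>t. G V t - G W t) r = integral {R..r} (\<lambda>s. II (G V) s / w s - II (G W) s / w s)"
    unfolding PP_def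
    by (rule Henstock_Kurzweil_Integration.integral_cong) (auto simp: II_G_diff diff_divide_distrib)
  also have "\<dots> = PP (G V) r - PP (G W) r"
    unfolding PP_def
    by (rule Henstock_Kurzweil_Integration.integral_diff; rule integrable_continuous_interval; rule IIw_cont[OF GIL])
  finally show ?thesis .
qed

lemma PP_cont: "continuous_on {R<..} (PP (G V))"
  by (rule continuous_at_imp_continuous_on) (auto intro: DERIV_isCont PP_deriv[OF GIL])

lemma TT_bcont: "(\<lambda>x. PP (G V) (R + exp x) / rho (R + exp x)) \<in> bcontfun"
proof (rule bcontfun_normI)
  have "continuous_on {R<..} (\<lambda>r. PP (G V) r / rho r)"
    using rho_pos by (intro continuous_intros PP_cont rho_cont) force
  then show "continuous_on UNIV (\<lambda>x. PP (G V) (R + exp x) / rho (R + exp x))"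
    by (rule continuous_on_compose2[where f="\<lambda>x. R + exp x"]) (auto intro!: continuous_intros)
next
  fix x :: real
  define r where "r = R + exp x"
  have r: "R < r" by (simp add: r_def)
  have "\<bar>PP (G V) r\<bar> \<le> (aG / (\<beta> * (\<beta> - 1)) + bG V / k^2) * rho r"
    by (rule outer_main[OF GIL]) (use r in auto)
  then have "\<bar>PP (G V) r / rho r\<bar> \<le> aG / (\<beta> * (\<beta> - 1)) + bG V / k^2"
    using rho_pos[OF r] by (simp add: divide_le_eq abs_divide)
  then show "norm (PP (G V) (R + exp x) / rho (R + exp x)) \<le> aG / (\<beta> * (\<beta> - 1)) + bG V / k^2"
    by (simp add: r_def)
qed

lemma TT_apply: "apply_bcontfun (TT V) x = PP (G V) (R + exp x) / rho (R + exp x)"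
  unfolding TT_def by (simp add: Bcontfun_inverse[OF TT_bcont])

lemma TT_contr: "dist (TT V) (TT W) \<le> \<theta> * dist V W"
proof (rule dist_bound)
  fix x :: real
  define r where "r = R + exp x"
  have r: "R < r" by (simp add: r_def)
  have "\<bar>PP (\<lambda>t. G V t - G W t) r\<bar> \<le> ((a0 * dist V W) / (\<beta> * (\<beta> - 1)) + (BB * dist V W) / k^2) * rho r"
    by (rule outer_main[OF DIL]) (use r in auto)
  also have "\<dots> = \<theta> * dist V W * rho r" by (simp add: \<theta>_def algebra_simps)
  finally have "\<bar>PP (G V) r - PP (G W) r\<bar> / rho r \<le> \<theta> * dist V W"
    using PP_G_diff[of r V W] r rho_pos[OF r] by (simp add: divide_le_eq)
  then show "dist (apply_bcontfun (TT V) x) (apply_bcontfun (TT W) x) \<le> \<theta> * dist V W"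
    using rho_pos[OF r] by (simp add: TT_apply dist_real_def r_def[symmetric] diff_divide_distrib[symmetric] abs_divide)
qed

lemma fixed_point: "\<exists>V. TT V = V"
proof -
  have "0 \<le> \<theta>" unfolding \<theta>_def using a0_pos BB_pos b1 by auto
  then show ?thesis using banach_fix_type[OF _ theta_lt1, of TT] TT_contr by blast
qed


context
  fixes V assumes fixV: "TT V = V"
begin

definition U where "U = PP (G V)"
definition I where "I = II (G V)"

lemma uu_U: "R < t \<Longrightarrow> uu V t = U t"
proof -
  assume t: "R < t"
  have "uu V t = rho t * apply_bcontfun (TT V) (ln (t - R))" by (simp add: uu_def fixV)
  also have "\<dots> = U t" using t rho_pos[OF t] by (simp add: TT_apply U_def)
  finally show ?thesis .
qed

lemma g_eq: "R < t \<Longrightarrow> G V t = F (max (U t) (m t))"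
  by (simp add: G_def uu_U)

lemma wG_int: "R \<le> s \<Longrightarrow> (\<lambda>t. w t * G V t) integrable_on {R..s}"
  by (rule inner_main(1)[OF GIL])

lemma Iw_int: "(\<lambda>s. I s / w s) integrable_on {R..r}"
  unfolding I_def by (rule integrable_continuous_interval; rule IIw_cont[OF GIL])

lemma U_int: "U r = integral {R..r} (\<lambda>s. I s / w s)"
  by (simp add: U_def PP_def I_def)

lemma I_int: "I s = integral {R..s} (\<lambda>t. w t * G V t)"
  by (simp add: I_def II_def)

lemma wG_nonneg: "R \<le> t \<Longrightarrow> w t * G V t \<ge> 0"
  using G_pos[of t V] w_pos[of t] R0 by (cases "t = R") (auto simp: G_R)

lemma I_nonneg: "R \<le> s \<Longrightarrow> I s \<ge> 0"
  unfolding I_int by (rule Henstock_Kurzweil_Integration.integral_nonneg[OF wG_int]) (auto intro: wG_nonneg)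

lemma U_deriv: "R < r \<Longrightarrow> (U has_real_derivative I r / w r) (at r)"
  unfolding U_def I_def by (rule PP_deriv[OF GIL])

lemma I_deriv: "R < s \<Longrightarrow> (I has_real_derivative w s * G V s) (at s)"
  unfolding I_def by (rule II_deriv[OF GIL])

lemma U_cont: "continuous_on {R<..} U"
  unfolding U_def by (rule PP_cont)

lemma U_mono: "R < t \<Longrightarrow> t \<le> r \<Longrightarrow> U t \<le> U r"
proof -
  assume t: "R < t" "t \<le> r"
  show ?thesis
  proof (rule DERIV_nonneg_imp_increasing_open[OF t(2)])
    fix x assume x: "t < x" "x < r"
    then have "R < x" using t by auto
    then show "\<exists>y. (U has_real_derivative y) (at x) \<and> 0 \<le> y"
      using U_deriv I_nonneg[of x] w_pos[of x] R0 by (intro exI[of _ "I x / w x"]) auto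
  next
    show "continuous_on {t..r} U" by (rule continuous_on_subset[OF U_cont]) (use t in auto)
  qed
qed

lemma U_upper:
  assumes r: "R < r" "r - R \<le> \<delta>"
  shows "U r \<le> c2 * (r - R) powr \<beta>"
proof -
  define X where "X = max (U r) (m r)"
  have X0: "X > 0" using m_pos[OF r(1)] by (simp add: X_def)
  define C where "C = \<gamma> * c1 powr (\<gamma> - 1)"
  have C0: "C \<ge> 0" using g0 by (simp add: C_def)
  have step1: "I s \<le> w s * (\<beta> / 2 * X * (s - R) + C * ((s - R) powr (\<beta> - 1) / (\<beta> - 1)))"
    if s: "R \<le> s" "s \<le> r" for s
  proof -
    have hi: "((\<lambda>t. w s * (\<beta> / 2 * X + C * (t - R) powr (\<beta> - 2))) has_integral
               (w s * (\<beta> / 2 * X * (s - R) + C * ((s - R) powr (\<beta> - 1) / (\<beta> - 1))))) {R..s}"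
    proof -
      have p: "((\<lambda>t. (t - R) powr (\<beta> - 2)) has_integral ((s - R) powr (\<beta> - 1) / (\<beta> - 1))) {R..s}"
        using int_shift_powr[OF s(1), of "\<beta> - 1"] b1 by (simp add: algebra_simps)
      have c: "((\<lambda>t. \<beta> / 2 * X) has_integral (\<beta> / 2 * X * (s - R))) {R..s}"
        using has_integral_const_real[of "\<beta> / 2 * X" R s] s by (simp add: mult.commute)
      show ?thesis by (intro has_integral_mult_right has_integral_add c p)
    qed
    have "I s \<le> integral {R..s} (\<lambda>t. w s * (\<beta> / 2 * X + C * (t - R) powr (\<beta> - 2)))"
      unfolding I_int
    proof (rule Henstock_Kurzweil_Integration.integral_le[OF wG_int[OF s(1)]])
      show "(\<lambda>t. w s * (\<beta> / 2 * X + C * (t - R) powr (\<beta> - 2))) integrable_on {R..s}"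
        using hi by blast
      fix t assume t: "t \<in> {R..s}"
      show "w t * G V t \<le> w s * (\<beta> / 2 * X + C * (t - R) powr (\<beta> - 2))"
      proof (cases "t = R")
        case True
        then show ?thesis using X0 w_pos[of s] s R0 b1 by (simp add: G_R)
      next
        case False
        then have tR: "R < t" using t by auto
        define Y where "Y = max (U t) (m t)"
        have Y: "m t \<le> Y" "Y \<le> X" "Y > 0"
          using U_mono[OF tR, of r] m_mono[OF tR, of r] t s m_pos[OF tR] by (auto simp: Y_def X_def)
        have "Y powr (\<gamma> - 1) \<le> m t powr (\<gamma> - 1)"
          using Y m_pos[OF tR] g1 by (intro powr_mono2') auto
        also have "\<dots> = c1 powr (\<gamma> - 1) * (t - R) powr (\<beta> - 2)"
          using m_pow1[OF tR] t s r by (simp add: min_def)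
        finally have Yp: "Y powr (\<gamma> - 1) \<le> c1 powr (\<gamma> - 1) * (t - R) powr (\<beta> - 2)" .
        have "G V t = \<beta> / 2 * Y + \<gamma> * Y powr (\<gamma> - 1)" by (simp add: g_eq[OF tR] F_def Y_def)
        also have "\<dots> \<le> \<beta> / 2 * X + C * (t - R) powr (\<beta> - 2)"
          unfolding C_def using Y Yp b1 g0 by (intro add_mono) (auto simp: mult.assoc)
        finally have Gt: "G V t \<le> \<beta> / 2 * X + C * (t - R) powr (\<beta> - 2)" .
        have "w t * G V t \<le> w s * G V t"
          using w_mono[of t s] t G_pos[OF tR, of V] R0 by (intro mult_right_mono) auto
        also have "\<dots> \<le> w s * (\<beta> / 2 * X + C * (t - R) powr (\<beta> - 2))"
          using Gt w_pos[of s] s R0 by (intro mult_left_mono) auto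
        finally show ?thesis .
      qed
    qed
    also have "\<dots> = w s * (\<beta> / 2 * X * (s - R) + C * ((s - R) powr (\<beta> - 1) / (\<beta> - 1)))"
      using hi by (rule integral_unique)
    finally show ?thesis .
  qed
  have hi2: "((\<lambda>s. \<beta> / 2 * X * (s - R) + C * ((s - R) powr (\<beta> - 1) / (\<beta> - 1))) has_integral
              (\<beta> / 2 * X * ((r - R)^2 / 2) + C * ((r - R) powr \<beta> / (\<beta> * (\<beta> - 1))))) {R..r}"
  proof -
    have q: "((\<lambda>s. s - R) has_integral ((r - R)^2 / 2)) {R..r}"
    proof -
      have "((\<lambda>s. s - R) has_integral ((\<lambda>s. (s - R)^2 / 2) r - (\<lambda>s. (s - R)^2 / 2) R)) {R..r}"
        by (rule ftc_real) (use r in \<open>auto intro!: continuous_intros derivative_eq_intros\<close>)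
      then show ?thesis by simp
    qed
    have p: "((\<lambda>s. (s - R) powr (\<beta> - 1)) has_integral ((r - R) powr \<beta> / \<beta>)) {R..r}"
      using int_shift_powr[of R r \<beta>] r b1 by simp
    have p': "((\<lambda>s. (s - R) powr (\<beta> - 1) / (\<beta> - 1)) has_integral ((r - R) powr \<beta> / (\<beta> * (\<beta> - 1)))) {R..r}"
      using has_integral_mult_left[OF p, of "1 / (\<beta> - 1)"] by simp
    show ?thesis
      using has_integral_add[OF has_integral_mult_right[OF q, of "\<beta> / 2 * X"] has_integral_mult_right[OF p', of C]]
      by (simp add: mult.assoc)
  qed
  have "U r \<le> integral {R..r} (\<lambda>s. \<beta> / 2 * X * (s - R) + C * ((s - R) powr (\<beta> - 1) / (\<beta> - 1)))"
    unfolding U_int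
  proof (rule Henstock_Kurzweil_Integration.integral_le[OF Iw_int])
    show "(\<lambda>s. \<beta> / 2 * X * (s - R) + C * ((s - R) powr (\<beta> - 1) / (\<beta> - 1))) integrable_on {R..r}"
      using hi2 by blast
    fix s assume s: "s \<in> {R..r}"
    have ws: "w s > 0" using w_pos[of s] s R0 by auto
    show "I s / w s \<le> \<beta> / 2 * X * (s - R) + C * ((s - R) powr (\<beta> - 1) / (\<beta> - 1))"
      using step1[of s] s ws by (simp add: divide_le_eq mult.commute)
  qed
  also have "\<dots> = \<beta> / 2 * X * ((r - R)^2 / 2) + C * ((r - R) powr \<beta> / (\<beta> * (\<beta> - 1)))"
    using hi2 by (rule integral_unique)
  finally have Ur: "U r \<le> \<beta> / 4 * X * (r - R)^2 + E * c1 powr (\<gamma> - 1) * (r - R) powr \<beta>"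
    by (simp add: C_def E_def)
  show ?thesis
  proof (cases "U r \<le> m r")
    case True
    have "c1 * (r - R) powr \<beta> \<le> c2 * (r - R) powr \<beta>" by (intro mult_right_mono c1_le_c2) auto
    then show ?thesis using True m_small[OF r] by linarith
  next
    case False
    then have XU: "X = U r" by (simp add: X_def)
    have sq: "(r - R)^2 \<le> \<delta>^2" using r by (intro power_mono) auto
    have "U r * D \<le> U r * (1 - \<beta> / 4 * (r - R)^2)"
      using sq X0 XU b1 by (intro mult_left_mono) (auto simp: D_def)
    also have "\<dots> \<le> E * c1 powr (\<gamma> - 1) * (r - R) powr \<beta>"
      using Ur XU by (simp add: algebra_simps)
    finally have "U r \<le> E * c1 powr (\<gamma> - 1) * (r - R) powr \<beta> / D"
      using D_pos by (simp add: le_divide_eq)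
    then show ?thesis by (simp add: c2_def)
  qed
qed


lemma U_lower_small:
  assumes r: "R < r" "r - R \<le> \<delta>"
  shows "m r \<le> U r"
proof -
  define C where "C = \<gamma> * c2 powr (\<gamma> - 1)"
  have C0: "C \<ge> 0" using g0 by (simp add: C_def)
  define \<omega> where "\<omega> = w R / w (R + \<delta>)"
  have wR: "w R > 0" "w (R + \<delta>) > 0" using w_pos R0 dpos by auto
  have om0: "\<omega> \<ge> 0" using wR by (simp add: \<omega>_def)
  have step1: "w R * (C * ((s - R) powr (\<beta> - 1) / (\<beta> - 1))) \<le> I s"
    if s: "R \<le> s" "s \<le> r" for s
  proof -
    have hi: "((\<lambda>t. w R * (C * (t - R) powr (\<beta> - 2))) has_integral
               (w R * (C * ((s - R) powr (\<beta> - 1) / (\<beta> - 1))))) {R..s}"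
    proof -
      have p: "((\<lambda>t. (t - R) powr (\<beta> - 2)) has_integral ((s - R) powr (\<beta> - 1) / (\<beta> - 1))) {R..s}"
        using int_shift_powr[OF s(1), of "\<beta> - 1"] b1 by (simp add: algebra_simps)
      show ?thesis by (intro has_integral_mult_right p)
    qed
    have "w R * (C * ((s - R) powr (\<beta> - 1) / (\<beta> - 1))) = integral {R..s} (\<lambda>t. w R * (C * (t - R) powr (\<beta> - 2)))"
      using hi by (rule integral_unique[symmetric])
    also have "\<dots> \<le> I s"
      unfolding I_int
    proof (rule Henstock_Kurzweil_Integration.integral_le[OF _ wG_int[OF s(1)]])
      show "(\<lambda>t. w R * (C * (t - R) powr (\<beta> - 2))) integrable_on {R..s}"
        using hi by blast
      fix t assume t: "t \<in> {R..s}"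
      show "w R * (C * (t - R) powr (\<beta> - 2)) \<le> w t * G V t"
      proof (cases "t = R")
        case True
        then show ?thesis by (simp add: G_R)
      next
        case False
        then have tR: "R < t" using t by auto
        have tr: "t - R \<le> \<delta>" using t s r by auto
        define Y where "Y = max (U t) (m t)"
        have Yp: "Y > 0" using m_pos[OF tR] by (simp add: Y_def)
        have Yle: "Y \<le> c2 * (t - R) powr \<beta>"
        proof -
          have "m t \<le> c2 * (t - R) powr \<beta>"
            using m_small[OF tR tr] c1_le_c2 by (auto intro: mult_right_mono)
          then show ?thesis using U_upper[OF tR tr] by (simp add: Y_def)
        qed
        have "C * (t - R) powr (\<beta> - 2) = \<gamma> * (c2 * (t - R) powr \<beta>) powr (\<gamma> - 1)"
          using c2_pos tR by (simp add: C_def powr_mult powr_powr bg1)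
        also have "\<dots> \<le> \<gamma> * Y powr (\<gamma> - 1)"
          using Yp Yle g0 g1 by (intro mult_left_mono powr_mono2') auto
        also have "\<dots> \<le> G V t"
          using Yp b1 by (simp add: g_eq[OF tR] F_def Y_def)
        finally have Gt: "C * (t - R) powr (\<beta> - 2) \<le> G V t" .
        show ?thesis
          using Gt w_mono[of R t] tR R0 C0 wR by (intro mult_mono) auto
      qed
    qed
    finally show ?thesis .
  qed
  have hi2: "((\<lambda>s. \<omega> * (C * ((s - R) powr (\<beta> - 1) / (\<beta> - 1)))) has_integral
              (\<omega> * (C * ((r - R) powr \<beta> / (\<beta> * (\<beta> - 1)))))) {R..r}"
  proof -
    have p: "((\<lambda>s. (s - R) powr (\<beta> - 1)) has_integral ((r - R) powr \<beta> / \<beta>)) {R..r}"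
      using int_shift_powr[of R r \<beta>] r b1 by simp
    have p': "((\<lambda>s. (s - R) powr (\<beta> - 1) / (\<beta> - 1)) has_integral ((r - R) powr \<beta> / (\<beta> * (\<beta> - 1)))) {R..r}"
      using has_integral_mult_left[OF p, of "1 / (\<beta> - 1)"] by simp
    show ?thesis by (intro has_integral_mult_right p')
  qed
  have "\<omega> * (C * ((r - R) powr \<beta> / (\<beta> * (\<beta> - 1)))) = integral {R..r} (\<lambda>s. \<omega> * (C * ((s - R) powr (\<beta> - 1) / (\<beta> - 1))))"
    using hi2 by (rule integral_unique[symmetric])
  also have "\<dots> \<le> U r"
    unfolding U_int
  proof (rule Henstock_Kurzweil_Integration.integral_le[OF _ Iw_int])
    show "(\<lambda>s. \<omega> * (C * ((s - R) powr (\<beta> - 1) / (\<beta> - 1)))) integrable_on {R..r}"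
      using hi2 by blast
    fix s assume s: "s \<in> {R..r}"
    have ws: "w s > 0" "w s \<le> w (R + \<delta>)" using w_pos[of s] w_mono[of s "R + \<delta>"] s r R0 by auto
    have L0: "C * ((s - R) powr (\<beta> - 1) / (\<beta> - 1)) \<ge> 0" using C0 b1 by auto
    have "\<omega> * (C * ((s - R) powr (\<beta> - 1) / (\<beta> - 1))) = w R * (C * ((s - R) powr (\<beta> - 1) / (\<beta> - 1))) / w (R + \<delta>)"
      by (simp add: \<omega>_def)
    also have "\<dots> \<le> I s / w (R + \<delta>)"
      using step1[of s] s wR by (intro divide_right_mono) auto
    also have "\<dots> \<le> I s / w s"
      using I_nonneg[of s] s ws by (intro divide_left_mono) auto
    finally show "\<omega> * (C * ((s - R) powr (\<beta> - 1) / (\<beta> - 1))) \<le> I s / w s" .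
  qed
  finally have "\<omega> * E * c2 powr (\<gamma> - 1) * (r - R) powr \<beta> \<le> U r"
    by (simp add: C_def E_def)
  moreover have "m r \<le> \<omega> * E * c2 powr (\<gamma> - 1) * (r - R) powr \<beta>"
    using m_small[OF r] mult_right_mono[OF A5', of "(r - R) powr \<beta>"] by (simp add: \<omega>_def)
  ultimately show ?thesis by linarith
qed

lemma U_lower: "R < r \<Longrightarrow> m r \<le> U r"
proof -
  assume r: "R < r"
  show ?thesis
  proof (cases "r - R \<le> \<delta>")
    case True then show ?thesis using U_lower_small r by auto
  next
    case False
    have "m r = m (R + \<delta>)" using False by (simp add: m_large)
    also have "\<dots> \<le> U (R + \<delta>)" using U_lower_small[of "R + \<delta>"] dpos by auto
    also have "\<dots> \<le> U r" using U_mono[of "R + \<delta>" r] False dpos by auto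
    finally show ?thesis .
  qed
qed

lemma U_pos: "R < r \<Longrightarrow> U r > 0"
  using U_lower m_pos by (meson less_le_trans)

lemma G_U: "R < t \<Longrightarrow> G V t = F (U t)"
proof -
  assume t: "R < t"
  then have "max (U t) (m t) = U t" using U_lower[OF t] by simp
  then show ?thesis using g_eq[OF t] by simp
qed


definition p where "p r = (real n - 1) / r + r / 2"
definition Q where "Q r = G V r - p r * (I r / w r)"

lemma Iw_deriv: "R < r \<Longrightarrow> ((\<lambda>s. I s / w s) has_real_derivative Q r) (at r)"
proof -
  assume r: "R < r"
  have wr: "w r > 0" using w_pos r R0 by auto
  have "((\<lambda>s. I s / w s) has_real_derivative
          (w r * G V r * w r - I r * (w r * ((real n - 1) / r + r / 2))) / (w r * w r)) (at r)"
    by (rule DERIV_divide[OF I_deriv[OF r] w_deriv]) (use r R0 wr in auto)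
  moreover have "(w r * G V r * w r - I r * (w r * ((real n - 1) / r + r / 2))) / (w r * w r) = Q r"
    using wr by (simp add: Q_def p_def field_simps)
  ultimately show ?thesis by simp
qed

lemma derivU: "R < s \<Longrightarrow> deriv U s = I s / w s"
  by (rule DERIV_imp_deriv[OF U_deriv])

lemma dU_deriv: "R < r \<Longrightarrow> (deriv U has_real_derivative Q r) (at r)"
  by (rule has_field_derivative_transform_within_open[OF Iw_deriv, of r "{R<..}"]) (auto simp: derivU)

lemma ddU: "R < r \<Longrightarrow> deriv (deriv U) r = Q r"
  by (rule DERIV_imp_deriv[OF dU_deriv])

lemma I_cont: "continuous_on {R<..} I"
  by (rule continuous_at_imp_continuous_on) (auto intro: DERIV_isCont I_deriv)

lemma Q_cont: "continuous_on {R<..} Q"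
proof -
  have "\<forall>x\<in>{R<..}. w x \<noteq> 0 \<and> x \<noteq> 0"
  proof
    fix x :: real assume "x \<in> {R<..}"
    then show "w x \<noteq> 0 \<and> x \<noteq> 0" using w_pos[of x] R0 by auto
  qed
  then show ?thesis unfolding Q_def p_def
    by (intro continuous_intros G_cont I_cont w_cont) auto
qed

lemma U_ode: "R < r \<Longrightarrow> deriv (deriv U) r + ((real n - 1) / r + r / 2) * deriv U r - \<beta> / 2 * U r = \<gamma> * U r powr (\<gamma> - 1)"
  by (simp add: ddU derivU Q_def p_def G_U F_def)

lemma U_lim: "(U \<longlongrightarrow> 0) (at_right R)"
proof (rule Lim_null_comparison)
  show "eventually (\<lambda>r. norm (U r) \<le> (aG / (\<beta> * (\<beta> - 1)) + bG V / k^2) * rho r) (at_right R)"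
    using eventually_at_right_less[of R]
    by eventually_elim (auto simp: U_def intro!: outer_main[OF GIL])
  show "((\<lambda>r. (aG / (\<beta> * (\<beta> - 1)) + bG V / k^2) * rho r) \<longlongrightarrow> 0) (at_right R)"
    using tendsto_mult[OF tendsto_const rho_tendsto] by simp
qed

lemma dU_lim: "(deriv U \<longlongrightarrow> 0) (at_right R)"
proof (rule Lim_null_comparison)
  show "eventually (\<lambda>r. norm (deriv U r) \<le> hb aG (bG V) r) (at_right R)"
    using eventually_at_right_less[of R]
  proof eventually_elim
    case (elim r)
    have wr: "w r > 0" using w_pos elim R0 by auto
    have "\<bar>I r\<bar> \<le> w r * hb aG (bG V) r" unfolding I_def by (rule inner_main(2)[OF GIL]) (use elim in auto)
    then show ?case using derivU[OF elim] wr by (simp add: abs_divide divide_le_eq mult.commute)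
  qed
  show "(hb aG (bG V) \<longlongrightarrow> 0) (at_right R)" by (rule hb_tendsto)
qed

lemma U_solution:
  "(\<forall>r\<in>{R<..}. U differentiable (at r) \<and> deriv U differentiable (at r)) \<and>
     continuous_on {R<..} (deriv (deriv U)) \<and>
     (\<forall>r\<in>{R<..}. U r > 0) \<and>
     (U \<longlongrightarrow> 0) (at_right R) \<and>
     (deriv U \<longlongrightarrow> 0) (at_right R) \<and>
     (\<forall>r\<in>{R<..}. deriv (deriv U) r + ((real n - 1) / r + r / 2) * deriv U r
                     - \<beta> / 2 * U r = \<gamma> * U r powr (\<gamma> - 1))"
proof (intro conjI ballI)
  fix r assume "r \<in> {R<..}"
  then have r: "R < r" by simp
  show "U differentiable (at r)" using U_deriv[OF r] by (auto simp: real_differentiable_def)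
  show "deriv U differentiable (at r)" using dU_deriv[OF r] by (auto simp: real_differentiable_def)
  show "U r > 0" by (rule U_pos[OF r])
  show "deriv (deriv U) r + ((real n - 1) / r + r / 2) * deriv U r - \<beta> / 2 * U r = \<gamma> * U r powr (\<gamma> - 1)"
    by (rule U_ode[OF r])
next
  show "continuous_on {R<..} (deriv (deriv U))"
    by (rule continuous_on_eq[OF Q_cont]) (auto simp: ddU)
qed (rule U_lim, rule dU_lim)

end

lemma exists_solution:
  "\<exists>U :: real \<Rightarrow> real.
     (\<forall>r\<in>{R<..}. U differentiable (at r) \<and> deriv U differentiable (at r)) \<and>
     continuous_on {R<..} (deriv (deriv U)) \<and>
     (\<forall>r\<in>{R<..}. U r > 0) \<and>
     (U \<longlongrightarrow> 0) (at_right R) \<and>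
     (deriv U \<longlongrightarrow> 0) (at_right R) \<and>
     (\<forall>r\<in>{R<..}. deriv (deriv U) r + ((real n - 1) / r + r / 2) * deriv U r
                     - \<beta> / 2 * U r = \<gamma> * U r powr (\<gamma> - 1))"
  using fixed_point U_solution by blast

end


lemma params_exist:
  fixes n :: nat and R \<gamma> \<beta> :: real
  assumes n1: "n \<ge> 1" and R0: "R > 0" and g0: "0 < \<gamma>" and g1: "\<gamma> < 1"
    and bdef: "\<beta> = 2 / (2 - \<gamma>)"
  shows "\<exists>k c1 \<delta>. M n R \<gamma> \<beta> k c1 \<delta>"
proof -
  have b1: "\<beta> > 1" using g0 g1 by (auto simp: bdef field_simps)
  define E where "E = \<gamma> / (\<beta> * (\<beta> - 1))"
  have E0: "E > 0" using g0 b1 by (simp add: E_def)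
  define \<omega> where "\<omega> d = (R ^ (n - 1) * exp (R^2 / 4)) / ((R + d) ^ (n - 1) * exp ((R + d)^2 / 4))" for d :: real
  define \<phi> where "\<phi> d = ln (\<omega> d) + (1 - \<gamma>) * ln (1 - \<beta> * d^2 / 4)" for d
  have om_lim: "(\<omega> \<longlongrightarrow> 1) (at_right 0)"
  proof -
    have "(\<omega> \<longlongrightarrow> (R ^ (n - 1) * exp (R^2 / 4)) / ((R + 0) ^ (n - 1) * exp ((R + 0)^2 / 4))) (at_right 0)"
      unfolding \<omega>_def[abs_def] using R0 by (intro tendsto_intros) auto
    then show ?thesis using R0 by simp
  qed
  have phi_lim: "(\<phi> \<longlongrightarrow> 0) (at_right 0)"
  proof -
    have "(\<phi> \<longlongrightarrow> ln 1 + (1 - \<gamma>) * ln (1 - \<beta> * 0^2 / 4)) (at_right 0)"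
      unfolding \<phi>_def[abs_def] by (intro tendsto_intros om_lim) auto
    then show ?thesis by simp
  qed
  have lg: "\<gamma> * ln (1 - \<gamma>) < 0" using g0 g1 by (simp add: mult_pos_neg)
  have ev1: "eventually (\<lambda>d. \<phi> d > \<gamma> * ln (1 - \<gamma>)) (at_right 0)"
    by (rule order_tendstoD(1)[OF phi_lim lg])
  have ev2: "eventually (\<lambda>d. \<beta> * d^2 / 4 < 1) (at_right (0::real))"
  proof -
    have "((\<lambda>d::real. \<beta> * d^2 / 4) \<longlongrightarrow> \<beta> * 0^2 / 4) (at_right 0)" by (intro tendsto_intros) auto
    then show ?thesis by (rule order_tendstoD(2)) simp
  qed
  have ev3: "eventually (\<lambda>d. 0 < d) (at_right (0::real))" by (rule eventually_at_right_less)
  obtain \<delta> where d0: "0 < \<delta>" and dD: "\<beta> * \<delta>^2 / 4 < 1" and dphi: "\<phi> \<delta> > \<gamma> * ln (1 - \<gamma>)"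
    using eventually_happens'[OF trivial_limit_at_right_real eventually_conj[OF ev1 eventually_conj[OF ev2 ev3]]] by blast
  define D where "D = 1 - \<beta> * \<delta>^2 / 4"
  have D0: "D > 0" "D \<le> 1" using dD b1 d0 by (auto simp: D_def)
  have om0: "\<omega> \<delta> > 0" "\<omega> \<delta> \<le> 1"
  proof -
    show "\<omega> \<delta> > 0" using R0 d0 by (simp add: \<omega>_def)
    have "R ^ (n - 1) \<le> (R + \<delta>) ^ (n - 1)" using R0 d0 by (intro power_mono) auto
    moreover have "exp (R^2 / 4) \<le> exp ((R + \<delta>)^2 / 4)" using R0 d0 by (simp add: power_mono)
    ultimately have "R ^ (n - 1) * exp (R^2 / 4) \<le> (R + \<delta>) ^ (n - 1) * exp ((R + \<delta>)^2 / 4)"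
      using R0 d0 by (intro mult_mono) auto
    then show "\<omega> \<delta> \<le> 1" using R0 d0 by (simp add: \<omega>_def divide_le_eq)
  qed
  define e where "e = ln E"
  define dd where "dd = ln D"
  define lom where "lom = ln (\<omega> \<delta>)"
  have o0: "lom \<le> 0" using om0 by (simp add: lom_def)
  have dd0: "dd \<le> 0" using D0 by (simp add: dd_def)
  have Sphi: "\<gamma> * ln (1 - \<gamma>) < lom + (1 - \<gamma>) * dd"
    using dphi by (simp add: \<phi>_def lom_def dd_def D_def)
  define S where "S = lom + \<gamma> * e + (1 - \<gamma>) * dd"
  define x where "x = S / (\<gamma> * (2 - \<gamma>))"
  have gg: "\<gamma> * (2 - \<gamma>) > 0" using g0 g1 by simp
  have hx: "x * (\<gamma> * (2 - \<gamma>)) = S" using gg g0 g1 by (simp add: x_def)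
  define c1 where "c1 = exp x"
  have c1p: "c1 > 0" by (simp add: c1_def)
  have pw: "c1 powr a = exp (a * x)" for a by (simp add: c1_def powr_def)
  have Ee: "E = exp e" using E0 by (simp add: e_def)
  have Dd: "D = exp dd" using D0 by (simp add: dd_def)
  have Oo: "\<omega> \<delta> = exp lom" using om0 by (simp add: lom_def)
  have quot: "E * c1 powr (\<gamma> - 1) / D = exp (e + (\<gamma> - 1) * x - dd)"
    by (simp add: pw Ee Dd exp_add exp_diff)
  have A4: "c1 \<le> E * c1 powr (\<gamma> - 1) / D"
  proof -
    have "(2 - \<gamma>) * x * \<gamma> = S" using hx by (simp add: algebra_simps)
    then have "(2 - \<gamma>) * x * \<gamma> \<le> (e - dd) * \<gamma>" using o0 dd0 g0 by (simp add: S_def algebra_simps)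
    then have "(2 - \<gamma>) * x \<le> e - dd" using g0 by simp
    then have "x \<le> e + (\<gamma> - 1) * x - dd" by (simp add: algebra_simps)
    then show ?thesis by (subst quot) (simp add: c1_def)
  qed
  have A5: "c1 \<le> \<omega> \<delta> * E * (E * c1 powr (\<gamma> - 1) / D) powr (\<gamma> - 1)"
  proof -
    have "(E * c1 powr (\<gamma> - 1) / D) powr (\<gamma> - 1) = exp ((\<gamma> - 1) * (e + (\<gamma> - 1) * x - dd))"
      by (subst quot) (simp add: powr_def)
    then have r: "\<omega> \<delta> * E * (E * c1 powr (\<gamma> - 1) / D) powr (\<gamma> - 1) = exp (lom + e + (\<gamma> - 1) * (e + (\<gamma> - 1) * x - dd))"
      by (simp add: Oo Ee exp_add)
    have "lom + e + (\<gamma> - 1) * (e + (\<gamma> - 1) * x - dd) = x + (S - x * (\<gamma> * (2 - \<gamma>)))"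
      by (simp add: S_def algebra_simps power2_eq_square)
    then have "lom + e + (\<gamma> - 1) * (e + (\<gamma> - 1) * x - dd) = x" using hx by simp
    then show ?thesis using r by (simp add: c1_def)
  qed
  define \<theta>0 where "\<theta>0 = \<gamma> * (1 - \<gamma>) * c1 powr (\<gamma> - 2) / (\<beta> * (\<beta> - 1))"
  have th0: "\<theta>0 < 1"
  proof -
    have "\<theta>0 = exp (ln (1 - \<gamma>) + e + (\<gamma> - 2) * x)"
      using g1 E0 by (simp add: \<theta>0_def pw exp_add e_def E_def)
    moreover have "ln (1 - \<gamma>) + e + (\<gamma> - 2) * x < 0"
    proof -
      have "(ln (1 - \<gamma>) + e + (\<gamma> - 2) * x) * \<gamma> = \<gamma> * ln (1 - \<gamma>) - (lom + (1 - \<gamma>) * dd)"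
        using hx by (simp add: S_def algebra_simps)
      also have "\<dots> < 0" using Sphi by simp
      finally show ?thesis using g0 by (simp add: mult_less_0_iff)
    qed
    ultimately show ?thesis by simp
  qed
  have th00: "\<theta>0 \<ge> 0" using g0 g1 b1 by (simp add: \<theta>0_def)
  define B where "B = \<beta> / 2 + \<gamma> * (1 - \<gamma>) * c1 powr (\<gamma> - 2) / \<delta>^2"
  have B0: "B > 0" unfolding B_def using b1 g0 g1 by (intro add_pos_nonneg) auto
  define k where "k = max 1 (2 * B / (1 - \<theta>0))"
  have k1: "k \<ge> 1" by (simp add: k_def)
  have A6: "\<theta>0 + B / k^2 < 1"
  proof -
    have "B / k^2 \<le> B / k" using k1 B0 by (intro divide_left_mono) (auto simp: power2_eq_square)
    also have "\<dots> \<le> B / (2 * B / (1 - \<theta>0))" using B0 th0 k1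
      by (intro divide_left_mono) (auto simp: k_def)
    also have "\<dots> = (1 - \<theta>0) / 2" using B0 th0 by (simp add: field_simps)
    finally have "B / k^2 \<le> (1 - \<theta>0) / 2" .
    then have "\<theta>0 + B / k^2 \<le> \<theta>0 + (1 - \<theta>0) / 2" by (rule add_left_mono)
    also have "\<dots> < 1" using th0 by (simp add: field_simps)
    finally show ?thesis .
  qed
  have "M n R \<gamma> \<beta> k c1 \<delta>"
  proof (unfold_locales)
    show "n \<ge> 1" "R > 0" "0 < \<gamma>" "\<gamma> < 1" "\<beta> = 2 / (2 - \<gamma>)" by (fact assms)+
    show "k > 0" using k1 by simp
    show "c1 > 0" by (fact c1p)
    show "\<delta> > 0" by (fact d0)
    show "\<beta> * \<delta>^2 / 4 < 1" by (fact dD)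
    show "c1 \<le> \<gamma> / (\<beta> * (\<beta> - 1)) * c1 powr (\<gamma> - 1) / (1 - \<beta> * \<delta>^2 / 4)"
      using A4 by (simp add: E_def D_def)
    show "c1 \<le> R ^ (n - 1) * exp (R^2 / 4) / ((R + \<delta>) ^ (n - 1) * exp ((R + \<delta>)^2 / 4)) * (\<gamma> / (\<beta> * (\<beta> - 1))) *
      (\<gamma> / (\<beta> * (\<beta> - 1)) * c1 powr (\<gamma> - 1) / (1 - \<beta> * \<delta>^2 / 4)) powr (\<gamma> - 1)"
      using A5 by (simp add: E_def D_def \<omega>_def)
    show "\<gamma> * (1 - \<gamma>) * c1 powr (\<gamma> - 2) / (\<beta> * (\<beta> - 1)) + (\<beta> / 2 + \<gamma> * (1 - \<gamma>) * c1 powr (\<gamma> - 2) / \<delta>^2) / k^2 < 1"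
      using A6 by (simp add: \<theta>0_def B_def)
  qed
  then show ?thesis by blast
qed

theorem lemma6p6:
  fixes n :: nat and R \<gamma> \<beta> :: real
  assumes "n \<ge> 1" and "R > 0" and "0 < \<gamma>" and "\<gamma> < 1"
    and "\<beta> = 2 / (2 - \<gamma>)"
  shows "\<exists>U :: real \<Rightarrow> real.
     (\<forall>r\<in>{R<..}. U differentiable (at r) \<and> deriv U differentiable (at r)) \<and>
     continuous_on {R<..} (deriv (deriv U)) \<and>
     (\<forall>r\<in>{R<..}. U r > 0) \<and>
     (U \<longlongrightarrow> 0) (at_right R) \<and>
     (deriv U \<longlongrightarrow> 0) (at_right R) \<and>
     (\<forall>r\<in>{R<..}. deriv (deriv U) r + ((real n - 1) / r + r / 2) * deriv U r
                     - \<beta> / 2 * U r = \<gamma> * U r powr (\<gamma> - 1))"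
proof -
  obtain k c1 \<delta> where "M n R \<gamma> \<beta> k c1 \<delta>" using params_exist[OF assms] by blast
  then show ?thesis by (rule M.exists_solution)
qed

end
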